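(* There is a constant $C_2>0$ such that for every analytic function $f\colon\mathbb{D}\to G$ and every $\lambda>0$, $$\mathcal{A}(\{z\in\mathbb{D}:|f(z)|>\lambda\})\le\frac{C_2}{\lambda^4}\,|f(0)|^4.$$ In particular, there is a constant $K_2>0$ such that $\|f\|_{L^2(\mathbb{D},\mathcal{A})}\le K_2|f(0)|$ for every such function.
   Context: $\mathbb{D}$ is the open unit disk, $\mathcal{A}$ the normalized area measure $dx\,dy/\pi$ on $\mathbb{D}$, and $G=\{z\in\mathbb{C}\setminus\{0\}:|\arg z|<\pi/4\}$. *)

theory Defs
  imports "HOL-Complex_Analysis.Complex_Analysis"
begin

definition diskA :: "complex measure" where
  "diskA = density lborel (\<lambda>z. ennreal (indicator (ball (0::complex) 1) z / pi))"

definition sectorG :: "complex set" where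
  "sectorG = {z. z \<noteq> 0 \<and> \<bar>Arg z\<bar> < pi / 4}"

end

theory Submission
  imports Defs
begin

lemma box_complex_vimage:
  "(\<lambda>(x,y). Complex x y) -` box l u = {Re l<..<Re u} \<times> {Im l<..<Im u}"
  by (auto simp: box_def Basis_complex_def)

lemma lborel_complex_pair:
  "distr (lborel :: (real \<times> real) measure) borel (\<lambda>(x,y). Complex x y) = (lborel :: complex measure)"
proof (rule lborel_eqI[symmetric])
  fix l u :: complex
  assume le: "\<And>b. b \<in> Basis \<Longrightarrow> l \<bullet> b \<le> u \<bullet> b"
  have "Re l \<le> Re u" "Im l \<le> Im u" using le[of 1] le[of \<i>] by (auto simp: Basis_complex_def)
  have m: "(\<lambda>(x,y). Complex x y) \<in> borel_measurable (lborel :: (real \<times> real) measure)"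
  proof -
    have e: "(\<lambda>(x,y). Complex x y) = (\<lambda>p. complex_of_real (fst p) + \<i> * complex_of_real (snd p))"
      by (auto simp: complex_eq_iff)
    show ?thesis unfolding e
      by (simp only: measurable_lborel2) (intro borel_measurable_continuous_onI continuous_intros)
  qed
  show "emeasure (distr lborel borel (\<lambda>(x,y). Complex x y)) (box l u) = (\<Prod>b\<in>Basis. (u - l) \<bullet> b)"
    apply (subst emeasure_distr[OF m])
     apply simp
    apply (simp add: box_complex_vimage lborel_prod[symmetric] lborel.emeasure_pair_measure_Times)
    using \<open>Re l \<le> Re u\<close> \<open>Im l \<le> Im u\<close>
    apply (simp add: Basis_complex_def ennreal_mult)
    done
qed simp

lemma emeasure_lborel_translate:
  fixes B :: "real set"
  assumes "B \<in> sets borel"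
  shows "emeasure lborel ((\<lambda>x. x + c) -` B) = emeasure lborel B"
proof -
  have "emeasure (distr lborel borel ((+) c)) B = emeasure lborel B"
    by (simp add: lborel_distr_plus)
  then have "emeasure lborel ((+) c -` B) = emeasure lborel B"
    using assms by (subst (asm) emeasure_distr) (auto simp: add.commute[of c])
  moreover have "(\<lambda>x. x + c) -` B = (+) c -` B" by (auto simp: add.commute)
  ultimately show ?thesis using assms by (simp add: emeasure_distr)
qed

lemma shear1:
  "distr (lborel :: (real \<times> real) measure) borel (\<lambda>(x,y). (x + a*y, y)) = lborel"
proof (rule measure_eqI)
  have m: "(\<lambda>(x,y). (x + a*y, y)) \<in> borel_measurable (lborel :: (real \<times> real) measure)"
    by (simp only: measurable_lborel2 case_prod_unfold) (intro borel_measurable_continuous_onI continuous_intros)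
  fix A :: "(real \<times> real) set" assume "A \<in> sets (distr lborel borel (\<lambda>(x,y). (x + a*y, y)))"
  then have A: "A \<in> sets borel" by simp
  have A2: "A \<in> sets (lborel \<Otimes>\<^sub>M lborel)"
    using A by (simp only: lborel_prod sets_lborel)
  have SA: "(\<lambda>(x,y). (x + a*y, y)) -` A \<in> sets (lborel \<Otimes>\<^sub>M lborel)"
    using measurable_sets[OF m A] by (simp only: lborel_prod sets_lborel space_lborel space_borel Int_UNIV_right)
  have fib: "(\<lambda>x. (x, y)) -` A \<in> sets borel" for y
  proof -
    have "(\<lambda>x::real. (x,y)) \<in> borel_measurable borel" by (intro borel_measurable_continuous_onI continuous_intros)
    from measurable_sets[OF this A] show ?thesis by simp
  qed
  have "emeasure (distr lborel borel (\<lambda>(x,y). (x + a*y, y))) A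
      = emeasure (lborel \<Otimes>\<^sub>M lborel) ((\<lambda>(x,y). (x + a*y, y)) -` A)"
    using A by (subst emeasure_distr[OF m]) (auto simp: lborel_prod)
  also have "\<dots> = (\<integral>\<^sup>+y. emeasure lborel ((\<lambda>x. (x, y)) -` ((\<lambda>(x,y). (x + a*y, y)) -` A)) \<partial>lborel)"
    by (rule lborel_pair.emeasure_pair_measure_alt2[OF SA])
  also have "\<dots> = (\<integral>\<^sup>+y. emeasure lborel ((\<lambda>x. (x, y)) -` A) \<partial>lborel)"
  proof (intro nn_integral_cong)
    fix y :: real
    have "(\<lambda>x. (x, y)) -` ((\<lambda>(x,y). (x + a*y, y)) -` A) = (\<lambda>x. x + a*y) -` ((\<lambda>x. (x, y)) -` A)"
      by auto
    then show "emeasure lborel ((\<lambda>x. (x, y)) -` ((\<lambda>(x,y). (x + a*y, y)) -` A)) = emeasure lborel ((\<lambda>x. (x, y)) -` A)"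
      using emeasure_lborel_translate[OF fib] by simp
  qed
  also have "\<dots> = emeasure (lborel \<Otimes>\<^sub>M lborel) A"
    by (rule lborel_pair.emeasure_pair_measure_alt2[OF A2, symmetric])
  finally show "emeasure (distr lborel borel (\<lambda>(x,y). (x + a*y, y))) A = emeasure lborel A"
    by (simp add: lborel_prod)
qed simp


lemma shear2:
  "distr (lborel :: (real \<times> real) measure) borel (\<lambda>(x,y). (x, y + b*x)) = lborel"
proof (rule measure_eqI)
  have m: "(\<lambda>(x,y). (x, y + b*x)) \<in> borel_measurable (lborel :: (real \<times> real) measure)"
    by (simp only: measurable_lborel2 case_prod_unfold) (intro borel_measurable_continuous_onI continuous_intros)
  fix A :: "(real \<times> real) set" assume "A \<in> sets (distr lborel borel (\<lambda>(x,y). (x, y + b*x)))"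
  then have A: "A \<in> sets borel" by simp
  have A2: "A \<in> sets (lborel \<Otimes>\<^sub>M lborel)"
    using A by (simp only: lborel_prod sets_lborel)
  have SA: "(\<lambda>(x,y). (x, y + b*x)) -` A \<in> sets (lborel \<Otimes>\<^sub>M lborel)"
    using measurable_sets[OF m A] by (simp only: lborel_prod sets_lborel space_lborel space_borel Int_UNIV_right)
  have fib: "Pair x -` A \<in> sets borel" for x
  proof -
    have "(\<lambda>y::real. (x,y)) \<in> borel_measurable borel" by (intro borel_measurable_continuous_onI continuous_intros)
    from measurable_sets[OF this A] show ?thesis by simp
  qed
  have "emeasure (distr lborel borel (\<lambda>(x,y). (x, y + b*x))) A
      = emeasure (lborel \<Otimes>\<^sub>M lborel) ((\<lambda>(x,y). (x, y + b*x)) -` A)"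
    using A by (subst emeasure_distr[OF m]) (auto simp: lborel_prod)
  also have "\<dots> = (\<integral>\<^sup>+x. emeasure lborel (Pair x -` ((\<lambda>(x,y). (x, y + b*x)) -` A)) \<partial>lborel)"
    by (rule lborel.emeasure_pair_measure_alt[OF SA])
  also have "\<dots> = (\<integral>\<^sup>+x. emeasure lborel (Pair x -` A) \<partial>lborel)"
  proof (intro nn_integral_cong)
    fix x :: real
    have "Pair x -` ((\<lambda>(x,y). (x, y + b*x)) -` A) = (\<lambda>y. y + b*x) -` (Pair x -` A)"
      by auto
    then show "emeasure lborel (Pair x -` ((\<lambda>(x,y). (x, y + b*x)) -` A)) = emeasure lborel (Pair x -` A)"
      using emeasure_lborel_translate[OF fib] by simp
  qed
  also have "\<dots> = emeasure (lborel \<Otimes>\<^sub>M lborel) A"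
    by (rule lborel.emeasure_pair_measure_alt[OF A2, symmetric])
  finally show "emeasure (distr lborel borel (\<lambda>(x,y). (x, y + b*x))) A = emeasure lborel A"
    by (simp add: lborel_prod)
qed simp

lemma distr_lborel_comp:
  fixes f :: "'a::euclidean_space \<Rightarrow> 'b::euclidean_space" and g :: "'b \<Rightarrow> 'c::euclidean_space"
  assumes "f \<in> borel_measurable borel" "g \<in> borel_measurable borel"
    and "distr lborel borel f = lborel" "distr lborel borel g = lborel"
  shows "distr lborel borel (g \<circ> f) = lborel"
proof -
  have "distr lborel borel (g \<circ> f) = distr (distr lborel borel f) borel g"
    using assms by (subst distr_distr) auto
  also have "\<dots> = lborel" using assms by simp
  finally show ?thesis .
qed

lemma lborel_pair_complex:
  "distr (lborel :: complex measure) borel (\<lambda>z. (Re z, Im z)) = (lborel :: (real\<times>real) measure)"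
proof -
  have m: "(\<lambda>(x,y). Complex x y) \<in> borel_measurable (borel :: (real \<times> real) measure)"
  proof -
    have e: "(\<lambda>(x,y). Complex x y) = (\<lambda>p. complex_of_real (fst p) + \<i> * complex_of_real (snd p))"
      by (auto simp: complex_eq_iff)
    show ?thesis unfolding e
      by (intro borel_measurable_continuous_onI continuous_intros)
  qed
  have m2: "(\<lambda>z. (Re z, Im z)) \<in> borel_measurable (borel :: complex measure)"
    by (intro borel_measurable_continuous_onI continuous_intros)
  have "distr (lborel :: complex measure) borel (\<lambda>z. (Re z, Im z))
     = distr (distr (lborel :: (real \<times> real) measure) borel (\<lambda>(x,y). Complex x y)) borel (\<lambda>z. (Re z, Im z))"
    by (simp add: lborel_complex_pair)
  also have "\<dots> = distr lborel borel ((\<lambda>z. (Re z, Im z)) \<circ> (\<lambda>(x,y). Complex x y))"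
    using m m2 by (subst distr_distr) auto
  also have "(\<lambda>z. (Re z, Im z)) \<circ> (\<lambda>(x,y). Complex x y) = (\<lambda>p. p)"
    by (auto simp: fun_eq_iff)
  finally show ?thesis by (simp add: distr_id2)
qed

lemma lborel_rot_aux:
  fixes c :: complex
  assumes c: "cmod c = 1" "Re c \<noteq> -1"
  shows "distr lborel borel (\<lambda>z. c * z) = (lborel :: complex measure)"
proof -
  define \<alpha> where "\<alpha> = - Im c / (1 + Re c)"
  define \<beta> where "\<beta> = Im c"
  have pos: "1 + Re c \<noteq> 0" using c by auto
  have cc: "Re c ^ 2 + Im c ^ 2 = 1" using c by (simp add: cmod_def)
  have ab: "1 + \<alpha> * \<beta> = Re c"
    using pos cc unfolding \<alpha>_def \<beta>_def by (simp add: field_simps power2_eq_square)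
  have ab2: "\<alpha> * (2 + \<alpha> * \<beta>) = - Im c"
  proof -
    have h: "2 + \<alpha> * \<beta> = 1 + Re c" using ab by linarith
    have "\<alpha> * (2 + \<alpha> * \<beta>) = \<alpha> * (1 + Re c)" by (simp only: h)
    also have "\<dots> = - Im c" using pos unfolding \<alpha>_def by simp
    finally show ?thesis .
  qed
  define Sx :: "real\<times>real \<Rightarrow> real\<times>real" where "Sx = (\<lambda>(x,y). (x + \<alpha>*y, y))"
  define Sy :: "real\<times>real \<Rightarrow> real\<times>real" where "Sy = (\<lambda>(x,y). (x, y + \<beta>*x))"
  define P :: "real\<times>real \<Rightarrow> complex" where "P = (\<lambda>(x,y). Complex x y)"
  define Q :: "complex \<Rightarrow> real\<times>real" where "Q = (\<lambda>z. (Re z, Im z))"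
  have eq: "(\<lambda>z. c * z) = P \<circ> (Sx \<circ> (Sy \<circ> (Sx \<circ> Q)))"
  proof
    fix z
    show "c * z = (P \<circ> (Sx \<circ> (Sy \<circ> (Sx \<circ> Q)))) z"
    proof -
      have r: "Re z + \<alpha>*Im z + \<alpha>*(Im z + \<beta>*(Re z + \<alpha>*Im z)) = (1+\<alpha>*\<beta>)*Re z + (\<alpha>*(2+\<alpha>*\<beta>))*Im z"
        by (simp add: algebra_simps)
      have i: "Im z + \<beta>*(Re z + \<alpha>*Im z) = \<beta>*Re z + (1+\<alpha>*\<beta>)*Im z"
        by (simp add: algebra_simps)
      have e1: "Re c * Re z - Im c * Im z = (1+\<alpha>*\<beta>)*Re z + (\<alpha>*(2+\<alpha>*\<beta>))*Im z"
        by (simp add: ab ab2)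
      have e2: "Re c * Im z + Im c * Re z = \<beta>*Re z + (1+\<alpha>*\<beta>)*Im z"
        using ab unfolding \<beta>_def by simp
      have "c * z = Complex (Re z + \<alpha>*Im z + \<alpha>*(Im z + \<beta>*(Re z + \<alpha>*Im z))) (Im z + \<beta>*(Re z + \<alpha>*Im z))"
      proof (rule complex_eqI)
        have "Re (c*z) = Re c * Re z - Im c * Im z" by simp
        also note e1
        also note r[symmetric]
        finally show "Re (c*z) = Re (Complex (Re z + \<alpha>*Im z + \<alpha>*(Im z + \<beta>*(Re z + \<alpha>*Im z))) (Im z + \<beta>*(Re z + \<alpha>*Im z)))" by simp
        have "Im (c*z) = Re c * Im z + Im c * Re z" by simp
        also note e2
        also note i[symmetric]
        finally show "Im (c*z) = Im (Complex (Re z + \<alpha>*Im z + \<alpha>*(Im z + \<beta>*(Re z + \<alpha>*Im z))) (Im z + \<beta>*(Re z + \<alpha>*Im z)))" by simp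
      qed
      then show ?thesis
        unfolding P_def Sx_def Sy_def Q_def comp_def by simp
    qed
  qed
  have mP: "P \<in> borel_measurable borel"
  proof -
    have e: "P = (\<lambda>p. complex_of_real (fst p) + \<i> * complex_of_real (snd p))"
      by (auto simp: complex_eq_iff P_def)
    show ?thesis unfolding e
      by (intro borel_measurable_continuous_onI continuous_intros)
  qed
  have mQ: "Q \<in> borel_measurable borel" unfolding Q_def
    by (intro borel_measurable_continuous_onI continuous_intros)
  have mSx: "Sx \<in> borel_measurable borel" unfolding Sx_def case_prod_unfold
    by (intro borel_measurable_continuous_onI continuous_intros)
  have mSy: "Sy \<in> borel_measurable borel" unfolding Sy_def case_prod_unfold
    by (intro borel_measurable_continuous_onI continuous_intros)
  have dP: "distr lborel borel P = lborel" unfolding P_def by (rule lborel_complex_pair)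
  have dQ: "distr lborel borel Q = lborel" unfolding Q_def by (rule lborel_pair_complex)
  have dSx: "distr lborel borel Sx = lborel" unfolding Sx_def by (rule shear1)
  have dSy: "distr lborel borel Sy = lborel" unfolding Sy_def by (rule shear2)
  show ?thesis unfolding eq
    by (intro distr_lborel_comp measurable_comp[where N=borel] mP mQ mSx mSy dP dQ dSx dSy)
qed

lemma lborel_rot:
  fixes c :: complex
  assumes c: "cmod c = 1"
  shows "distr lborel borel (\<lambda>z. c * z) = (lborel :: complex measure)"
proof (cases "Re c = -1")
  case False then show ?thesis using lborel_rot_aux c by blast
next
  case True
  have "Im c = 0" using c True by (simp add: cmod_def)
  then have "c = -1" using True by (simp add: complex_eq_iff)
  have e: "(\<lambda>z. c * z) = (\<lambda>z. \<i> * z) \<circ> (\<lambda>z. \<i> * z)"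
    using \<open>c = -1\<close> by (auto simp: fun_eq_iff)
  have m: "(\<lambda>z. \<i> * z) \<in> borel_measurable (borel :: complex measure)"
    by (intro borel_measurable_continuous_onI continuous_intros)
  have d: "distr lborel borel (\<lambda>z. \<i> * z) = (lborel :: complex measure)"
    by (rule lborel_rot_aux) auto
  show ?thesis unfolding e by (rule distr_lborel_comp[OF m m d d])
qed


lemma circle_mean:
  assumes G: "G holomorphic_on ball 0 1" and z: "z \<in> ball 0 1"
  shows "((\<lambda>t. G (exp (2 * of_real pi * \<i> * of_real t) * z)) has_integral G 0) {0..1}"
proof (cases "z = 0")
  case True
  then show ?thesis using has_integral_const_real[of "G 0" 0 1] by simp
next
  case False
  define K where "K = (\<lambda>u. G (u * z))"
  have nz: "norm z < 1" using z by simp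
  have "K holomorphic_on cball 0 1"
  proof -
    have "(\<lambda>u. u * z) ` cball 0 1 \<subseteq> ball 0 1"
    proof
      fix w assume "w \<in> (\<lambda>u. u * z) ` cball 0 1"
      then obtain u where u: "norm u \<le> 1" "w = u * z" by auto
      have "norm w = norm z * norm u" using u by (simp add: norm_mult)
      also have "\<dots> \<le> norm z" using u(1) by (simp add: mult_left_le)
      finally show "w \<in> ball 0 1" using nz by simp
    qed
    then show ?thesis unfolding K_def
      by (intro holomorphic_on_compose_gen[unfolded o_def, OF _ G]) (auto intro!: holomorphic_intros)
  qed
  from Cauchy_integral_circlepath_simple[OF this, of 0]
  have "((\<lambda>u. K u / (u - 0)) has_contour_integral 2 * of_real pi * \<i> * K 0) (circlepath 0 1)"
    by simp
  then have "((\<lambda>t. K (exp (2 * of_real pi * \<i> * of_real t)) / exp (2 * of_real pi * \<i> * of_real t)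
          * (2 * pi * \<i> * 1 * exp(2 * of_real pi * \<i> * of_real t))) has_integral 2 * of_real pi * \<i> * K 0) {0..1}"
    unfolding has_contour_integral_def
    by (rule has_integral_eq[rotated]) (subst vector_derivative_circlepath01; simp add: circlepath)
  then have "((\<lambda>t. (2 * of_real pi * \<i>) * K (exp (2 * of_real pi * \<i> * of_real t))) has_integral (2 * of_real pi * \<i>) * K 0) {0..1}"
    by (rule has_integral_eq[rotated]) (simp add: field_simps)
  then have "((\<lambda>t. inverse (2 * of_real pi * \<i>) * ((2 * of_real pi * \<i>) * K (exp (2 * of_real pi * \<i> * of_real t)))) has_integral inverse (2 * of_real pi * \<i>) * ((2 * of_real pi * \<i>) * K 0)) {0..1}"
    by (rule has_integral_mult_right)
  moreover have c: "inverse (2 * of_real pi * \<i>) * (2 * of_real pi * \<i>) = (1::complex)" by (rule left_inverse) simp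
  ultimately show ?thesis
    by (simp only: mult.assoc[symmetric] c mult_1 K_def mult_zero_left)
qed


lemma mean_value_set:
  fixes G :: "complex \<Rightarrow> complex" and S :: "complex set"
  assumes G: "G holomorphic_on ball 0 1" and bnd: "\<And>z. z \<in> ball 0 1 \<Longrightarrow> norm (G z) \<le> B"
    and S: "S \<in> sets borel" and Ssub: "S \<subseteq> ball 0 1"
    and rot: "\<And>c z. cmod c = 1 \<Longrightarrow> z \<in> S \<Longrightarrow> c * z \<in> S"
  shows "(\<integral>z. indicator S z *\<^sub>R G z \<partial>lborel) = measure lborel S *\<^sub>R G 0"
proof -
  define G' where "G' = (\<lambda>z. indicator (ball 0 1) z *\<^sub>R G z)"
  define e :: "real \<Rightarrow> complex" where "e = (\<lambda>t. exp (2 * of_real pi * \<i> * of_real t))"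
  define I where "I = (\<integral>z. indicator S z *\<^sub>R G z \<partial>lborel)"
  have ne: "cmod (e t) = 1" for t unfolding e_def by (simp add: norm_exp_eq_Re)
  have contG: "continuous_on (ball 0 1) G" using G holomorphic_on_imp_continuous_on by blast
  have mG'[measurable]: "G' \<in> borel_measurable borel"
    unfolding G'_def by (rule borel_measurable_continuous_on_indicator[OF _ contG]) simp
  have me[measurable]: "e \<in> borel_measurable borel"
    unfolding e_def by (intro borel_measurable_continuous_onI continuous_intros)
  have G'G: "z \<in> ball 0 1 \<Longrightarrow> G' z = G z" for z unfolding G'_def by simp
  have rotS: "cmod c = 1 \<Longrightarrow> (c * z \<in> S) = (z \<in> S)" for c z
  proof
    assume c: "cmod c = 1" and "c * z \<in> S"
    then have "cnj c * (c * z) \<in> S" using rot[of "cnj c"] by simp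
    moreover have "cnj c * (c * z) = z"
    proof -
      have "cnj c * c = 1" using complex_norm_square[of c] c by (simp add: mult.commute)
      then show ?thesis by (simp add: mult.assoc[symmetric])
    qed
    ultimately show "z \<in> S" by simp
  qed (use rot in auto)
  have finS: "emeasure lborel S < \<infinity>"
  proof -
    have "emeasure lborel S \<le> emeasure lborel (ball (0::complex) 1)" by (rule emeasure_mono[OF Ssub]) simp
    then show ?thesis using emeasure_lborel_ball_finite[of "0::complex" 1] by (rule le_less_trans)
  qed
  have A: "(\<integral>z. indicator S z *\<^sub>R G' (e t * z) \<partial>lborel) = I" for t
  proof -
    have "I = (\<integral>z. indicator S z *\<^sub>R G' z \<partial>lborel)"
      unfolding I_def by (intro Bochner_Integration.integral_cong) (auto simp: G'G indicator_def dest: subsetD[OF Ssub])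
    also have "\<dots> = (\<integral>z. indicator S z *\<^sub>R G' z \<partial>(distr lborel borel (\<lambda>z. e t * z)))"
      by (simp add: lborel_rot[OF ne])
    also have "\<dots> = (\<integral>z. indicator S (e t * z) *\<^sub>R G' (e t * z) \<partial>lborel)"
    proof -
      have mg: "(\<lambda>z. indicator S z *\<^sub>R G' z) \<in> borel_measurable borel" using S by measurable
      have mr: "(\<lambda>z. e t * z) \<in> measurable lborel borel"
        by (simp only: measurable_lborel2) (intro borel_measurable_continuous_onI continuous_intros)
      show ?thesis by (subst integral_distr[OF mr mg]) simp
    qed
    also have "\<dots> = (\<integral>z. indicator S z *\<^sub>R G' (e t * z) \<partial>lborel)"
      by (intro Bochner_Integration.integral_cong) (auto simp: indicator_def rotS[OF ne])
    finally show ?thesis ..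
  qed
  have B: "(\<integral>t. indicator {0..1} t *\<^sub>R G' (e t * z) \<partial>lborel) = G 0" if z: "z \<in> ball 0 1" for z
  proof -
    have eq: "(\<integral>t. indicator {0..1} t *\<^sub>R G' (e t * z) \<partial>lborel) = (\<integral>t. indicator {0..1} t *\<^sub>R G (e t * z) \<partial>lborel)"
      using z by (intro Bochner_Integration.integral_cong) (auto simp: G'G norm_mult ne)
    have cont: "continuous_on {0..1} (\<lambda>t. G (e t * z))"
    proof (rule continuous_on_compose2[OF contG])
      show "continuous_on {0..1} (\<lambda>t. e t * z)" unfolding e_def by (intro continuous_intros)
      show "(\<lambda>t. e t * z) ` {0..1} \<subseteq> ball 0 1" using z by (auto simp: norm_mult ne)
    qed
    have si: "set_integrable lborel {0..1} (\<lambda>t. G (e t * z))"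
      unfolding set_integrable_def by (rule borel_integrable_compact[OF _ cont]) simp
    have "(\<integral>t. indicator {0..1} t *\<^sub>R G (e t * z) \<partial>lborel) = integral {0..1} (\<lambda>t. G (e t * z))"
      using set_borel_integral_eq_integral(2)[OF si] by (simp add: set_lebesgue_integral_def)
    also have "\<dots> = G 0"
      using circle_mean[OF G z] unfolding e_def by (rule integral_unique)
    finally show ?thesis using eq by simp
  qed
  define F where "F = (\<lambda>t z. indicator ({0..1::real} \<times> S) (t, z) *\<^sub>R G' (e t * z))"
  have intF: "integrable (lborel \<Otimes>\<^sub>M lborel) (case_prod F)"
  proof -
    have "integrable lborel (\<lambda>p::real\<times>complex. indicator ({0..1} \<times> S) p *\<^sub>R G' (e (fst p) * snd p))"
    proof (rule integrableI_bounded_set_indicator[where B=B])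
      show "{0..1::real} \<times> S \<in> sets lborel"
      proof -
        have "{0..1::real} \<times> S \<in> sets (lborel \<Otimes>\<^sub>M lborel)" using S by (intro pair_measureI) auto
        then show ?thesis by (simp only: lborel_prod)
      qed
      show "(\<lambda>p::real\<times>complex. G' (e (fst p) * snd p)) \<in> borel_measurable lborel"
      proof -
        have "(\<lambda>p::real\<times>complex. e (fst p) * snd p) \<in> borel_measurable borel"
          unfolding e_def by (intro borel_measurable_continuous_onI continuous_intros)
        from measurable_compose[OF this mG'] show ?thesis by (simp only: measurable_lborel2)
      qed
      have "emeasure (lborel \<Otimes>\<^sub>M lborel) ({0..1::real} \<times> S) = emeasure lborel {0..1::real} * emeasure lborel S"
        using S by (intro lborel.emeasure_pair_measure_Times) auto
      then show "emeasure lborel ({0..1::real} \<times> S) < \<infinity>"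
        using finS by (simp add: lborel_prod ennreal_mult_less_top)
      show "AE x in lborel. x \<in> {0..1} \<times> S \<longrightarrow> norm (G' (e (fst x) * snd x)) \<le> B"
      proof (intro AE_I2 impI)
        fix x :: "real \<times> complex" assume "x \<in> {0..1} \<times> S"
        then have "e (fst x) * snd x \<in> ball 0 1" using Ssub by (auto simp: norm_mult ne)
        then show "norm (G' (e (fst x) * snd x)) \<le> B" using bnd G'G by simp
      qed
    qed
    then show ?thesis unfolding F_def by (simp add: lborel_prod case_prod_unfold)
  qed
  have "I = (\<integral>t. indicator {0..1::real} t *\<^sub>R I \<partial>lborel)"
  proof -
    have "integrable lborel (indicator {0..1::real} :: real \<Rightarrow> real)"
      by (intro integrable_real_indicator) auto
    then show ?thesis by simp
  qed
  also have "\<dots> = (\<integral>t. (\<integral>z. F t z \<partial>lborel) \<partial>lborel)"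
  proof (intro Bochner_Integration.integral_cong refl)
    fix t :: real
    have "(\<integral>z. F t z \<partial>lborel) = indicator {0..1} t *\<^sub>R (\<integral>z. indicator S z *\<^sub>R G' (e t * z) \<partial>lborel)"
      unfolding F_def by (simp add: indicator_times integral_scaleR_right[symmetric] mult.commute)
    then show "indicator {0..1} t *\<^sub>R I = (\<integral>z. F t z \<partial>lborel)" using A by simp
  qed
  also have "\<dots> = (\<integral>z. (\<integral>t. F t z \<partial>lborel) \<partial>lborel)"
    by (rule lborel_pair.Fubini_integral[OF intF, symmetric])
  also have "\<dots> = (\<integral>z. indicator S z *\<^sub>R G 0 \<partial>lborel)"
  proof (intro Bochner_Integration.integral_cong refl)
    fix z :: complex
    have "(\<integral>t. F t z \<partial>lborel) = indicator S z *\<^sub>R (\<integral>t. indicator {0..1} t *\<^sub>R G' (e t * z) \<partial>lborel)"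
      unfolding F_def by (simp add: indicator_times integral_scaleR_right[symmetric] mult.commute)
    then show "(\<integral>t. F t z \<partial>lborel) = indicator S z *\<^sub>R G 0"
      using B Ssub by (cases "z \<in> S") auto
  qed
  also have "\<dots> = measure lborel S *\<^sub>R G 0"
    using finS S by simp
  finally show ?thesis unfolding I_def .
qed


lemma sector_sq_Re_pos:
  fixes w :: complex
  assumes "w \<noteq> 0" "\<bar>Arg w\<bar> < pi / 4"
  shows "Re (w ^ 2) > 0"
proof -
  have "w ^ 2 = rcis (cmod w ^ 2) (real 2 * Arg w)"
    by (metis DeMoivre2 rcis_cmod_Arg)
  then have "Re (w ^ 2) = cmod w ^ 2 * cos (2 * Arg w)" by simp
  moreover have "cos (2 * Arg w) > 0" using assms(2) by (intro cos_gt_zero_pi) auto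
  moreover have "cmod w ^ 2 > 0" using assms(1) by simp
  ultimately show ?thesis by simp
qed

lemma Re_pos_bound:
  fixes h :: "complex \<Rightarrow> complex"
  assumes h: "h holomorphic_on ball 0 1" and pos: "\<And>z. z \<in> ball 0 1 \<Longrightarrow> Re (h z) > 0"
    and z: "z \<in> ball 0 1"
  shows "cmod (h z) * (1 - cmod z) \<le> 2 * cmod (h 0)"
proof -
  define a where "a = h 0"
  have Rea: "Re a > 0" using pos[of 0] by (simp add: a_def)
  have den: "h w + cnj a \<noteq> 0" if "w \<in> ball 0 1" for w
  proof
    assume "h w + cnj a = 0"
    then have "Re (h w + cnj a) = 0" by simp
    then show False using pos[OF that] Rea by simp
  qed
  define \<omega> where "\<omega> = (\<lambda>w. (h w - a) / (h w + cnj a))"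
  have om_hol: "\<omega> holomorphic_on ball 0 1"
    unfolding \<omega>_def using den by (intro holomorphic_intros h) auto
  have om0: "\<omega> 0 = 0" unfolding \<omega>_def a_def by simp
  have om_lt: "norm (\<omega> w) < 1" if "norm w < 1" for w
  proof -
    have w: "w \<in> ball 0 1" using that by simp
    have "cmod (h w - a) ^ 2 < cmod (h w + cnj a) ^ 2"
    proof -
      have "cmod (h w + cnj a) ^ 2 - cmod (h w - a) ^ 2 = 4 * Re a * Re (h w)"
        unfolding cmod_power2 by (simp add: algebra_simps power2_eq_square)
      then show ?thesis using pos[OF w] Rea by (smt (verit) mult_pos_pos)
    qed
    then have "cmod (h w - a) < cmod (h w + cnj a)"
      by (simp add: power_less_imp_less_base)
    then show ?thesis unfolding \<omega>_def using den[OF w] by (simp add: norm_divide divide_less_eq)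
  qed
  have sch: "norm (\<omega> z) \<le> norm z" using Schwarz_Lemma(1)[OF om_hol om0 om_lt] z by simp
  have nz: "norm z < 1" using z by simp
  have eq: "h z * (1 - \<omega> z) = a + cnj a * \<omega> z"
    unfolding \<omega>_def using den[OF z] by (simp add: field_simps)
  have "cmod (h z) * (1 - cmod z) \<le> cmod (h z) * (1 - cmod (\<omega> z))"
    using sch by (simp add: mult_left_mono)
  also have "\<dots> \<le> cmod (h z) * cmod (1 - \<omega> z)"
    by (intro mult_left_mono) (auto simp: norm_triangle_ineq2 intro: order_trans[OF _ norm_triangle_ineq2] )
  also have "\<dots> = cmod (a + cnj a * \<omega> z)" by (simp add: eq[symmetric] norm_mult)
  also have "\<dots> \<le> cmod a + cmod a * cmod (\<omega> z)"
    using norm_triangle_ineq[of a "cnj a * \<omega> z"] by (simp add: norm_mult)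
  also have "\<dots> \<le> 2 * cmod a"
  proof -
    have "cmod a * cmod (\<omega> z) \<le> cmod a" using sch nz by (intro mult_left_le) auto
    then show ?thesis by linarith
  qed
  finally show ?thesis by (simp add: a_def)
qed

lemma psi_facts:
  fixes w :: complex and \<mu> :: real
  assumes w: "Re w > 0" and mu: "\<mu> > 0"
  shows "w + of_real \<mu> \<noteq> 0"
    and "cmod (2 * w / (w + of_real \<mu>)) \<le> 2"
    and "Re (2 * w / (w + of_real \<mu>)) \<ge> 0"
    and "cmod w > \<mu> \<Longrightarrow> Re (2 * w / (w + of_real \<mu>)) \<ge> 1"
    and "Re (2 * w / (w + of_real \<mu>)) \<le> 2 * (cmod w ^ 2 + \<mu> * cmod w) / \<mu> ^ 2"
proof -
  have n2: "cmod (w + of_real \<mu>) ^ 2 = cmod w ^ 2 + 2 * \<mu> * Re w + \<mu> ^ 2"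
    unfolding cmod_power2 by (simp add: power2_eq_square algebra_simps)
  show nz: "w + of_real \<mu> \<noteq> 0"
  proof
    assume "w + of_real \<mu> = 0" then have "Re (w + of_real \<mu>) = 0" by simp
    then show False using w mu by simp
  qed
  have pos: "cmod (w + of_real \<mu>) > 0" using nz by simp
  have ge: "cmod (w + of_real \<mu>) \<ge> cmod w"
  proof -
    have p: "0 < 2*\<mu>*Re w" using w mu by simp
    have "cmod w ^ 2 \<le> cmod (w + of_real \<mu>) ^ 2" using n2 p zero_le_power2[of \<mu>] by linarith
    then show ?thesis by (rule power2_le_imp_le) simp
  qed
  have geu: "cmod (w + of_real \<mu>) \<ge> \<mu>"
  proof -
    have p: "0 < 2*\<mu>*Re w" using w mu by simp
    have "\<mu> ^ 2 \<le> cmod (w + of_real \<mu>) ^ 2" using n2 p zero_le_power2[of "cmod w"] by linarith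
    then show ?thesis by (rule power2_le_imp_le) simp
  qed
  show "cmod (2 * w / (w + of_real \<mu>)) \<le> 2"
    using ge pos by (simp add: norm_divide norm_mult divide_le_eq)
  have ReE: "Re (2 * w / (w + of_real \<mu>)) = 2 * (cmod w ^ 2 + \<mu> * Re w) / cmod (w + of_real \<mu>) ^ 2"
  proof -
    have "2 * w / (w + of_real \<mu>) = 2 * w * cnj (w + of_real \<mu>) / of_real (cmod (w + of_real \<mu>) ^ 2)"
    proof -
      have d: "complex_of_real (cmod (w + of_real \<mu>) ^ 2) = (w + of_real \<mu>) * cnj (w + of_real \<mu>)"
        by (rule complex_norm_square)
      have c: "cnj (w + of_real \<mu>) \<noteq> 0" using nz complex_cnj_zero_iff by blast
      show ?thesis unfolding d by (rule nonzero_mult_divide_mult_cancel_right[symmetric, OF c])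
    qed
    also have "Re \<dots> = 2 * (cmod w ^ 2 + \<mu> * Re w) / cmod (w + of_real \<mu>) ^ 2"
    proof -
      have cw: "cmod w * cmod w = Re w * Re w + Im w * Im w" using cmod_power2[of w] by (simp add: power2_eq_square)
      show ?thesis by (simp add: Re_divide_of_real power2_eq_square algebra_simps cw)
    qed
    finally show ?thesis .
  qed
  show "Re (2 * w / (w + of_real \<mu>)) \<ge> 0"
    unfolding ReE using w mu by (intro divide_nonneg_nonneg) auto
  show "cmod w > \<mu> \<Longrightarrow> Re (2 * w / (w + of_real \<mu>)) \<ge> 1"
  proof -
    assume a: "cmod w > \<mu>"
    have "cmod w ^ 2 > \<mu> ^ 2" using a mu by (simp add: power_strict_mono)
    then have "2 * (cmod w ^ 2 + \<mu> * Re w) \<ge> cmod (w + of_real \<mu>) ^ 2" unfolding n2 by simp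
    then show ?thesis unfolding ReE using pos by (simp add: le_divide_eq)
  qed
  show "Re (2 * w / (w + of_real \<mu>)) \<le> 2 * (cmod w ^ 2 + \<mu> * cmod w) / \<mu> ^ 2"
  proof -
    have "Re w \<le> cmod w" by (rule complex_Re_le_cmod)
    then have num: "0 \<le> 2 * (cmod w ^ 2 + \<mu> * Re w)" "2 * (cmod w ^ 2 + \<mu> * Re w) \<le> 2 * (cmod w ^ 2 + \<mu> * cmod w)"
      using w mu by auto
    have "\<mu> ^ 2 \<le> cmod (w + of_real \<mu>) ^ 2" using geu mu by (simp add: power_mono)
    then have "2 * (cmod w ^ 2 + \<mu> * Re w) / cmod (w + of_real \<mu>) ^ 2 \<le> 2 * (cmod w ^ 2 + \<mu> * Re w) / \<mu> ^ 2"
      using mu num(1) pos by (intro divide_left_mono) auto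
    also have "\<dots> \<le> 2 * (cmod w ^ 2 + \<mu> * cmod w) / \<mu> ^ 2"
      using num(2) mu by (intro divide_right_mono) auto
    finally show ?thesis unfolding ReE .
  qed
qed


lemma diskA_emeasure:
  assumes A: "A \<in> sets borel"
  shows "emeasure diskA A = emeasure lborel (A \<inter> ball 0 1) * ennreal (1 / pi)"
proof -
  have [measurable]: "ball (0::complex) 1 \<in> sets borel" by simp
  have m: "(\<lambda>z::complex. ennreal (indicator (ball (0::complex) 1) z / pi)) \<in> borel_measurable lborel"
    by measurable
  have "emeasure diskA A = (\<integral>\<^sup>+z. ennreal (indicator (ball 0 1) z / pi) * indicator A z \<partial>lborel)"
    unfolding diskA_def using A by (subst emeasure_density[OF m]) auto
  also have "\<dots> = (\<integral>\<^sup>+z. ennreal (1/pi) * indicator (A \<inter> ball 0 1) z \<partial>lborel)"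
    by (intro nn_integral_cong) (auto simp: indicator_def)
  also have "\<dots> = ennreal (1/pi) * emeasure lborel (A \<inter> ball 0 1)"
    using A by (subst nn_integral_cmult_indicator) auto
  finally show ?thesis by (simp add: mult.commute)
qed

lemma measure_ball_scale:
  assumes "\<rho> > 0"
  shows "measure lborel (ball (0::complex) \<rho>) = \<rho>^2 * measure lborel (ball (0::complex) 1)"
proof -
  have "(\<lambda>x. \<rho> *\<^sub>R x + 0) ` ball (0::complex) 1 = ball 0 \<rho>"
  proof
    show "(\<lambda>x. \<rho> *\<^sub>R x + 0) ` ball (0::complex) 1 \<subseteq> ball 0 \<rho>"
      using assms by (auto simp: norm_scaleR)
    show "ball 0 \<rho> \<subseteq> (\<lambda>x. \<rho> *\<^sub>R x + 0) ` ball (0::complex) 1"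
    proof
      fix y :: complex assume "y \<in> ball 0 \<rho>"
      then have "(1/\<rho>) *\<^sub>R y \<in> ball 0 1" "y = \<rho> *\<^sub>R ((1/\<rho>) *\<^sub>R y) + 0"
        using assms by (auto simp: norm_scaleR divide_simps)
      then show "y \<in> (\<lambda>x. \<rho> *\<^sub>R x + 0) ` ball 0 1" by blast
    qed
  qed
  then have "measure lebesgue (ball (0::complex) \<rho>) = \<bar>\<rho>\<bar> ^ DIM(complex) * measure lebesgue (ball (0::complex) 1)"
    using measure_lebesgue_affine[of \<rho> 0 "ball (0::complex) 1"] by simp
  then show ?thesis using assms by simp
qed

lemma measure_disk_le: "measure lborel (ball (0::complex) 1) \<le> 4"
proof -
  have sub: "ball (0::complex) 1 \<subseteq> cbox (-1 - \<i>) (1 + \<i>)"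
  proof
    fix z :: complex assume "z \<in> ball 0 1"
    then have "\<bar>Re z\<bar> \<le> 1" "\<bar>Im z\<bar> \<le> 1" using abs_Re_le_cmod[of z] abs_Im_le_cmod[of z]
      by auto
    then show "z \<in> cbox (-1 - \<i>) (1 + \<i>)" by (auto simp: cbox_def Basis_complex_def)
  qed
  have "measure lborel (ball (0::complex) 1) \<le> measure lborel (cbox (-1 - \<i>) (1 + \<i>))"
    by (rule measure_mono_fmeasurable[OF sub]) auto
  also have "\<dots> = 4" by (simp add: measure_lborel_cbox_eq Basis_complex_def)
  finally show ?thesis .
qed

lemma measure_annulus:
  assumes "0 < \<rho>" "\<rho> < 1"
  shows "measure lborel (ball (0::complex) 1 - ball 0 \<rho>) = (1 - \<rho>^2) * measure lborel (ball (0::complex) 1)"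
proof -
  have "measure lborel (ball (0::complex) 1 - ball 0 \<rho>) = measure lborel (ball (0::complex) 1) - measure lborel (ball (0::complex) \<rho>)"
    using assms emeasure_lborel_ball_finite[of "0::complex" 1] by (intro measure_Diff) auto
  then show ?thesis using measure_ball_scale[of \<rho>] assms by (simp add: algebra_simps)
qed


lemma open_level_set:
  fixes h :: "complex \<Rightarrow> complex"
  assumes "continuous_on (ball 0 1) h"
  shows "open {z \<in> ball 0 1. t < cmod (h z)}"
proof -
  have "{z \<in> ball 0 1. t < cmod (h z)} = ball 0 1 \<inter> h -` {w. t < cmod w}" by auto
  also have "open \<dots>"
    by (rule continuous_open_preimage[OF assms]) (auto intro: open_Collect_less continuous_intros)
  finally show ?thesis .
qed

lemma weak_h:
  fixes h :: "complex \<Rightarrow> complex"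
  assumes h: "h holomorphic_on ball 0 1" and pos: "\<And>z. z \<in> ball 0 1 \<Longrightarrow> Re (h z) > 0"
    and mu: "\<mu> > 0" and q: "cmod (h 0) / \<mu> < 1/4"
  shows "emeasure lborel {z \<in> ball 0 1. cmod (h z) > \<mu>} \<le> ennreal (40 * (cmod (h 0) / \<mu>)^2)"
proof -
  define a where "a = h 0"
  define qq where "qq = cmod a / \<mu>"
  define \<rho> where "\<rho> = 1 - 2 * qq"
  define E where "E = {z \<in> ball 0 1. cmod (h z) > \<mu>}"
  define Ann where "Ann = ball (0::complex) 1 - ball 0 \<rho>"
  define G where "G = (\<lambda>z. 2 * h z / (h z + of_real \<mu>))"
  have Rea: "Re a > 0" using pos[of 0] by (simp add: a_def)
  have an: "a \<noteq> 0" using Rea by auto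
  have qpos: "qq > 0" unfolding qq_def using an mu by simp
  have qlt: "qq < 1/4" using q by (simp add: qq_def a_def)
  have rho: "0 < \<rho>" "\<rho> < 1" unfolding \<rho>_def using qpos qlt by auto
  have contH: "continuous_on (ball 0 1) h" using h holomorphic_on_imp_continuous_on by blast
  have Eopen: "open E" unfolding E_def by (rule open_level_set[OF contH])
  have Esets: "E \<in> sets borel" using Eopen by simp
  have EAnn: "E \<subseteq> Ann"
  proof
    fix z assume "z \<in> E"
    then have z: "z \<in> ball 0 1" and hz: "cmod (h z) > \<mu>" unfolding E_def by auto
    have b: "cmod (h z) * (1 - cmod z) \<le> 2 * cmod a" using Re_pos_bound[OF h pos z] by (simp add: a_def)
    have "\<mu> * (1 - cmod z) < 2 * cmod a"
    proof (cases "1 - cmod z > 0")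
      case True
      then have "\<mu> * (1 - cmod z) < cmod (h z) * (1 - cmod z)" using hz by simp
      then show ?thesis using b by linarith
    next
      case False then show ?thesis using mu Rea
        by (smt (verit) complex_Re_le_cmod mult_nonneg_nonpos)
    qed
    then have "1 - cmod z < 2 * qq" unfolding qq_def using mu by (simp add: field_simps)
    then have "\<rho> < cmod z" unfolding \<rho>_def by simp
    then show "z \<in> Ann" using z unfolding Ann_def by auto
  qed
  have AnnD: "Ann \<subseteq> ball 0 1" unfolding Ann_def by auto
  have Annsets: "Ann \<in> sets borel" unfolding Ann_def by auto
  have hmu: "z \<in> ball 0 1 \<Longrightarrow> h z + of_real \<mu> \<noteq> 0" for z using psi_facts(1)[OF pos mu] by blast
  have Ghol: "G holomorphic_on ball 0 1" unfolding G_def using hmu by (intro holomorphic_intros h) auto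
  have Gbnd: "z \<in> ball 0 1 \<Longrightarrow> norm (G z) \<le> 2" for z unfolding G_def using psi_facts(2)[OF pos mu] by blast
  have Gnn: "z \<in> ball 0 1 \<Longrightarrow> Re (G z) \<ge> 0" for z unfolding G_def using psi_facts(3)[OF pos mu] by blast
  have Gge: "z \<in> ball 0 1 \<Longrightarrow> cmod (h z) > \<mu> \<Longrightarrow> Re (G z) \<ge> 1" for z unfolding G_def using psi_facts(4)[OF pos mu] by blast
  have G0: "Re (G 0) \<le> 2 * (cmod a ^ 2 + \<mu> * cmod a) / \<mu> ^ 2"
    unfolding G_def a_def using psi_facts(5)[OF pos mu, of 0] by simp
  have rotA: "cmod c = 1 \<Longrightarrow> z \<in> Ann \<Longrightarrow> c * z \<in> Ann" for c z unfolding Ann_def by (simp add: norm_mult)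
  have MV: "(\<integral>z. indicator Ann z *\<^sub>R G z \<partial>lborel) = measure lborel Ann *\<^sub>R G 0"
    by (rule mean_value_set[OF Ghol Gbnd Annsets AnnD rotA])
  have contG: "continuous_on Ann G" using holomorphic_on_imp_continuous_on[OF Ghol] continuous_on_subset AnnD by blast
  have finAnn: "emeasure lborel Ann < \<infinity>"
  proof -
    have "emeasure lborel Ann \<le> emeasure lborel (ball (0::complex) 1)" by (rule emeasure_mono[OF AnnD]) simp
    then show ?thesis using emeasure_lborel_ball_finite[of "0::complex" 1] by (rule le_less_trans)
  qed
  have mIG: "(\<lambda>z. indicator Ann z *\<^sub>R G z) \<in> borel_measurable lborel"
    using borel_measurable_continuous_on_indicator[OF Annsets contG] by simp
  have intG: "integrable lborel (\<lambda>z. indicator Ann z *\<^sub>R G z)"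
  proof (rule integrableI_bounded_set[where A=Ann and B=2])
    show "Ann \<in> sets lborel" using Annsets by simp
    show "AE x in lborel. x \<in> Ann \<longrightarrow> norm (indicator Ann x *\<^sub>R G x) \<le> 2"
      using Gbnd AnnD by (intro AE_I2) (auto simp: indicator_def)
  qed (use mIG finAnn in \<open>auto simp: indicator_def\<close>)
  have intR: "integrable lborel (\<lambda>z. Re (indicator Ann z *\<^sub>R G z))"
    using intG by (rule integrable_Re)
  have "emeasure lborel E = (\<integral>\<^sup>+z. indicator E z \<partial>lborel)"
    using Esets by simp
  also have "\<dots> \<le> (\<integral>\<^sup>+z. ennreal (Re (indicator Ann z *\<^sub>R G z)) \<partial>lborel)"
  proof (intro nn_integral_mono)
    fix z
    show "indicator E z \<le> ennreal (Re (indicator Ann z *\<^sub>R G z))"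
    proof (cases "z \<in> E")
      case True
      then have "z \<in> Ann" "z \<in> ball 0 1" "cmod (h z) > \<mu>" using EAnn unfolding E_def by auto
      then show ?thesis using Gge True by simp
    qed (simp add: indicator_def)
  qed
  also have "\<dots> = ennreal (\<integral>z. Re (indicator Ann z *\<^sub>R G z) \<partial>lborel)"
  proof (rule nn_integral_eq_integral[OF intR])
    show "AE x in lborel. 0 \<le> Re (indicator Ann x *\<^sub>R G x)"
      using Gnn AnnD by (intro AE_I2) (auto simp: indicator_def)
  qed
  also have "(\<integral>z. Re (indicator Ann z *\<^sub>R G z) \<partial>lborel) = measure lborel Ann * Re (G 0)"
    using integral_Re[OF intG] MV by simp
  also have "measure lborel Ann * Re (G 0) \<le> 40 * qq ^ 2"
  proof -
    have mA: "measure lborel Ann = (1 - \<rho>^2) * measure lborel (ball (0::complex) 1)"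
      unfolding Ann_def by (rule measure_annulus[OF rho])
    have r1: "1 - \<rho>^2 \<le> 4 * qq" unfolding \<rho>_def using qpos
      by (simp add: power2_eq_square algebra_simps)
    have r1': "0 \<le> 1 - \<rho>^2" using rho by (simp add: power2_eq_square) (smt (verit) mult_less_cancel_right1 mult_nonneg_nonneg)
    have mAle: "measure lborel Ann \<le> 16 * qq"
    proof -
      have "measure lborel Ann \<le> (4 * qq) * 4"
        unfolding mA using r1 r1' measure_disk_le qpos by (intro mult_mono) auto
      then show ?thesis by simp
    qed
    have G0': "Re (G 0) \<le> 5/2 * qq"
    proof -
      have "2 * (cmod a ^ 2 + \<mu> * cmod a) / \<mu> ^ 2 = 2 * (qq ^ 2 + qq)"
        unfolding qq_def using mu by (simp add: field_simps power2_eq_square)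
      also have "\<dots> \<le> 5/2 * qq" using qlt qpos by (simp add: power2_eq_square)
      finally show ?thesis using G0 by linarith
    qed
    have "measure lborel Ann * Re (G 0) \<le> (16 * qq) * (5/2 * qq)"
      using mAle G0' Gnn[of 0] by (intro mult_mono) auto
    then show ?thesis by (simp add: power2_eq_square)
  qed
  hence "ennreal (measure lborel Ann * Re (G 0)) \<le> ennreal (40 * qq ^ 2)" by (rule ennreal_leI)
  finally show ?thesis unfolding E_def qq_def a_def .
qed


lemma diskA_space: "emeasure diskA (space diskA) \<le> ennreal 2"
proof -
  have "space diskA = UNIV" by (simp add: diskA_def)
  then have "emeasure diskA (space diskA) = emeasure lborel (ball (0::complex) 1) * ennreal (1/pi)"
    using diskA_emeasure[of UNIV] by simp
  also have "\<dots> = ennreal (measure lborel (ball (0::complex) 1)) * ennreal (1/pi)"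
    using emeasure_lborel_ball_finite[of "0::complex" 1]
    by (simp add: emeasure_eq_ennreal_measure)
  also have "\<dots> = ennreal (measure lborel (ball (0::complex) 1) * (1/pi))"
    by (rule ennreal_mult''[symmetric]) simp
  also have "\<dots> \<le> ennreal 2"
  proof (rule ennreal_leI)
    have "measure lborel (ball (0::complex) 1) * (1/pi) \<le> 4 * (1/pi)"
      using measure_disk_le by (intro mult_right_mono) auto
    also have "\<dots> \<le> 2" using pi_gt3 by (simp add: field_simps)
    finally show "measure lborel (ball (0::complex) 1) * (1/pi) \<le> 2" .
  qed
  finally show ?thesis .
qed

lemma diskA_level:
  fixes f :: "complex \<Rightarrow> complex"
  assumes f: "f holomorphic_on ball 0 1" "f ` ball 0 1 \<subseteq> sectorG" and lam: "lam > 0"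
  shows "{z \<in> ball 0 1. lam < cmod (f z)} \<in> sets borel"
    and "emeasure diskA {z \<in> ball 0 1. lam < cmod (f z)} \<le> ennreal (32 * (cmod (f 0) ^ 2 / lam ^ 2) ^ 2)"
proof -
  define E where "E = {z \<in> ball 0 1. lam < cmod (f z)}"
  have contf: "continuous_on (ball 0 1) f" using f(1) holomorphic_on_imp_continuous_on by blast
  show Es: "{z \<in> ball 0 1. lam < cmod (f z)} \<in> sets borel"
    using open_level_set[OF contf] by simp
  define h where "h = (\<lambda>z. f z ^ 2)"
  have sec: "z \<in> ball 0 1 \<Longrightarrow> f z \<noteq> 0 \<and> \<bar>Arg (f z)\<bar> < pi / 4" for z
  proof -
    assume "z \<in> ball 0 1"
    then have "f z \<in> sectorG" using f(2) by blast
    then show ?thesis by (simp add: sectorG_def)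
  qed
  have hhol: "h holomorphic_on ball 0 1" unfolding h_def by (intro holomorphic_intros f(1))
  have hpos: "z \<in> ball 0 1 \<Longrightarrow> Re (h z) > 0" for z
    unfolding h_def using sec sector_sq_Re_pos by blast
  define q where "q = cmod (f 0) ^ 2 / lam ^ 2"
  have q: "cmod (h 0) / lam ^ 2 = q" unfolding h_def q_def by (simp add: norm_power)
  have qnn: "q \<ge> 0" unfolding q_def by simp
  have EE: "E = {z \<in> ball 0 1. cmod (h z) > lam ^ 2}"
  proof -
    have "lam < cmod (f z) \<longleftrightarrow> lam ^ 2 < cmod (f z) ^ 2" for z
      using lam by (smt (verit) norm_ge_zero power_mono power_strict_mono zero_less_numeral)
    then show ?thesis unfolding E_def h_def by (simp add: norm_power)
  qed
  have eA: "emeasure diskA E = emeasure lborel E * ennreal (1/pi)"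
    using diskA_emeasure[OF Es[folded E_def]] by (simp add: E_def Int_absorb2 subset_eq)
  have "emeasure diskA E \<le> ennreal (32 * q ^ 2)"
  proof (cases "q < 1/4")
    case True
    have "emeasure lborel E \<le> ennreal (40 * q ^ 2)"
      unfolding EE using weak_h[OF hhol hpos _ , of "lam^2"] lam True q by simp
    then have "emeasure diskA E \<le> ennreal (40 * q ^ 2) * ennreal (1/pi)"
      unfolding eA by (rule mult_right_mono) simp
    also have "\<dots> = ennreal (40 * q ^ 2 * (1/pi))" by (rule ennreal_mult''[symmetric]) simp
    also have "\<dots> \<le> ennreal (32 * q ^ 2)"
    proof (rule ennreal_leI)
      have "40 * (1/pi) \<le> 32" using pi_gt3 by (simp add: field_simps)
      then show "40 * q ^ 2 * (1/pi) \<le> 32 * q ^ 2"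
        by (metis mult.commute mult.left_commute mult_left_mono zero_le_power2 mult.assoc)
    qed
    finally show ?thesis .
  next
    case False
    have "emeasure diskA E \<le> emeasure diskA (space diskA)" by (rule emeasure_space)
    also have "\<dots> \<le> ennreal 2" by (rule diskA_space)
    also have "\<dots> \<le> ennreal (32 * q ^ 2)"
    proof (rule ennreal_leI)
      have "(1/4)^2 \<le> q ^ 2" using False by (intro power_mono) auto
      then show "2 \<le> 32 * q ^ 2" by (simp add: power2_eq_square)
    qed
    finally show ?thesis .
  qed
  then show "emeasure diskA {z \<in> ball 0 1. lam < cmod (f z)} \<le> ennreal (32 * (cmod (f 0) ^ 2 / lam ^ 2) ^ 2)"
    unfolding E_def q_def .
qed

lemma dyadic_bound:
  fixes g s :: real and P :: "nat \<Rightarrow> bool"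
  assumes s: "s > 0" and g: "g \<ge> 0" and P: "\<And>k. P k \<longleftrightarrow> s * 2 ^ k < g"
  shows "g \<le> s * 2 ^ n \<Longrightarrow> ennreal g \<le> ennreal s + (\<Sum>k<n. ennreal (s * 2 ^ Suc k) * (if P k then 1 else 0))"
proof (induction n)
  case 0
  then show ?case by (simp add: ennreal_leI)
next
  case (Suc n)
  show ?case
  proof (cases "g \<le> s * 2 ^ n")
    case True
    then have "ennreal g \<le> ennreal s + (\<Sum>k<n. ennreal (s * 2 ^ Suc k) * (if P k then 1 else 0))"
      by (rule Suc.IH)
    also have "\<dots> \<le> ennreal s + (\<Sum>k<Suc n. ennreal (s * 2 ^ Suc k) * (if P k then 1 else 0))"
      by (intro add_left_mono) (simp add: add_increasing2)
    finally show ?thesis .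
  next
    case False
    then have "P n" using P by simp
    have "ennreal g \<le> ennreal (s * 2 ^ Suc n)" using Suc.prems by (intro ennreal_leI) simp
    also have "\<dots> = ennreal (s * 2 ^ Suc n) * (if P n then 1 else 0)" using \<open>P n\<close> by simp
    also have "\<dots> \<le> (\<Sum>k<Suc n. ennreal (s * 2 ^ Suc k) * (if P k then 1 else 0))"
      by (simp add: add_increasing)
    also have "\<dots> \<le> ennreal s + (\<Sum>k<Suc n. ennreal (s * 2 ^ Suc k) * (if P k then 1 else 0))"
      by (simp add: add_increasing)
    finally show ?thesis .
  qed
qed


lemma AE_diskA: "AE z in diskA. z \<in> ball 0 1"
proof -
  have [measurable]: "ball (0::complex) 1 \<in> sets borel" by simp
  have m: "(\<lambda>z::complex. ennreal (indicator (ball (0::complex) 1) z / pi)) \<in> borel_measurable lborel"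
    by measurable
  show ?thesis unfolding diskA_def
    by (subst AE_density[OF m]) (auto intro!: AE_I2 simp: indicator_def)
qed

lemma sets_diskA[simp]: "sets diskA = sets borel"
  by (simp add: diskA_def)

lemma part2:
  fixes f :: "complex \<Rightarrow> complex"
  assumes f: "f holomorphic_on ball 0 1" "f ` ball 0 1 \<subseteq> sectorG"
  shows "(\<integral>\<^sup>+ z. ennreal (norm (f z) ^ 2) \<partial>diskA) \<le> ennreal ((sqrt 130 * norm (f 0)) ^ 2)"
proof -
  define s where "s = norm (f 0) ^ 2"
  have "f 0 \<in> sectorG" using f(2) by auto
  then have "f 0 \<noteq> 0" by (simp add: sectorG_def)
  then have s: "s > 0" unfolding s_def by simp
  define E where "E = (\<lambda>k::nat. {z \<in> ball 0 1. sqrt (s * 2 ^ k) < cmod (f z)})"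
  define c where "c = (\<lambda>k::nat. s * 2 ^ Suc k)"
  have Es: "E k \<in> sets borel" for k
    unfolding E_def by (rule diskA_level(1)[OF f]) (use s in simp)
  have Em: "emeasure diskA (E k) \<le> ennreal (32 * (1/2) ^ k * (1/2) ^ k)" for k
  proof -
    have "emeasure diskA (E k) \<le> ennreal (32 * (cmod (f 0) ^ 2 / sqrt (s * 2 ^ k) ^ 2) ^ 2)"
      unfolding E_def by (rule diskA_level(2)[OF f]) (use s in simp)
    also have "cmod (f 0) ^ 2 / sqrt (s * 2 ^ k) ^ 2 = (1/2) ^ k"
      using s unfolding s_def by (simp add: power_divide)
    finally show ?thesis by (simp add: power2_eq_square mult.assoc)
  qed
  have memE: "z \<in> E k \<longleftrightarrow> z \<in> ball 0 1 \<and> s * 2 ^ k < norm (f z) ^ 2" for z k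
  proof -
    have "sqrt (s * 2 ^ k) < norm (f z) \<longleftrightarrow> sqrt (s * 2 ^ k) < sqrt (norm (f z) ^ 2)" by simp
    also have "\<dots> \<longleftrightarrow> s * 2 ^ k < norm (f z) ^ 2" by (rule real_sqrt_less_iff)
    finally show ?thesis unfolding E_def by simp
  qed
  have pw: "ennreal (norm (f z) ^ 2) \<le> ennreal s + (\<Sum>k. ennreal (c k) * indicator (E k) z)"
    if z: "z \<in> ball 0 1" for z
  proof -
    obtain n where n: "norm (f z) ^ 2 / s < 2 ^ n" using real_arch_pow[of 2 "norm (f z) ^ 2 / s"] by auto
    then have gn: "norm (f z) ^ 2 \<le> s * 2 ^ n" using s by (simp add: divide_less_eq mult.commute)
    have "ennreal (norm (f z) ^ 2) \<le> ennreal s + (\<Sum>k<n. ennreal (s * 2 ^ Suc k) * (if z \<in> E k then 1 else 0))"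
      by (rule dyadic_bound[OF s _ _ gn]) (use memE z in auto)
    also have "(\<Sum>k<n. ennreal (s * 2 ^ Suc k) * (if z \<in> E k then 1 else 0)) = (\<Sum>k<n. ennreal (c k) * indicator (E k) z)"
      by (intro sum.cong refl) (simp add: c_def indicator_def)
    also have "\<dots> \<le> (\<Sum>k. ennreal (c k) * indicator (E k) z)"
      by (rule sum_le_suminf) auto
    finally show ?thesis by (simp add: add_left_mono)
  qed
  have mE: "(\<lambda>z. ennreal (c k) * indicator (E k) z) \<in> borel_measurable diskA" for k
  proof -
    have [measurable]: "E k \<in> sets diskA" using Es[of k] by simp
    show ?thesis by measurable
  qed
  have "(\<integral>\<^sup>+ z. ennreal (norm (f z) ^ 2) \<partial>diskA) \<le> (\<integral>\<^sup>+ z. (ennreal s + (\<Sum>k. ennreal (c k) * indicator (E k) z)) \<partial>diskA)"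
    by (rule nn_integral_mono_AE) (use AE_diskA pw in \<open>auto elim!: AE_mp\<close>)
  also have "\<dots> = (\<integral>\<^sup>+ z. ennreal s \<partial>diskA) + (\<integral>\<^sup>+ z. (\<Sum>k. ennreal (c k) * indicator (E k) z) \<partial>diskA)"
    by (rule nn_integral_add) (use mE in auto)
  also have "(\<integral>\<^sup>+ z. (\<Sum>k. ennreal (c k) * indicator (E k) z) \<partial>diskA) = (\<Sum>k. ennreal (c k) * emeasure diskA (E k))"
    using Es by (subst nn_integral_suminf[OF mE]) (simp add: nn_integral_cmult_indicator)
  also have "\<dots> \<le> (\<Sum>k. ennreal (64 * s * (1/2) ^ k))"
  proof (rule suminf_le)
    fix k
    have "ennreal (c k) * emeasure diskA (E k) \<le> ennreal (c k) * ennreal (32 * (1/2) ^ k * (1/2) ^ k)"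
      by (rule mult_left_mono[OF Em]) simp
    also have "\<dots> = ennreal (c k * (32 * (1/2) ^ k * (1/2) ^ k))"
      by (rule ennreal_mult[symmetric]) (use s in \<open>auto simp: c_def\<close>)
    also have "c k * (32 * (1/2) ^ k * (1/2) ^ k) = 64 * s * (1/2) ^ k"
      unfolding c_def by (simp add: power_divide field_simps)
    finally show "ennreal (c k) * emeasure diskA (E k) \<le> ennreal (64 * s * (1/2) ^ k)" .
  qed auto
  also have "(\<Sum>k. ennreal (64 * s * (1/2) ^ k)) = ennreal (\<Sum>k. 64 * s * (1/2) ^ k)"
    using s by (intro suminf_ennreal2 summable_mult summable_geometric) auto
  also have "(\<Sum>k. 64 * s * (1/2::real) ^ k) = 128 * s"
    by (subst suminf_mult) (auto simp: suminf_geometric)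
  also have "(\<integral>\<^sup>+ z. ennreal s \<partial>diskA) \<le> ennreal (2 * s)"
  proof -
    have "(\<integral>\<^sup>+ z. ennreal s \<partial>diskA) = ennreal s * emeasure diskA (space diskA)" by simp
    also have "\<dots> \<le> ennreal s * ennreal 2" by (rule mult_left_mono[OF diskA_space]) simp
    also have "\<dots> = ennreal (2 * s)" using s by (simp add: ennreal_mult mult.commute)
    finally show ?thesis .
  qed
  then have "(\<integral>\<^sup>+ z. ennreal s \<partial>diskA) + ennreal (128 * s) \<le> ennreal (2 * s) + ennreal (128 * s)"
    by (rule add_right_mono)
  also have "\<dots> = ennreal ((sqrt 130 * norm (f 0)) ^ 2)"
    using s by (simp add: ennreal_plus[symmetric] power_mult_distrib s_def del: ennreal_plus)
  finally show ?thesis by simp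
qed

theorem lemma3p5:
  shows "(\<exists>C2>0. \<forall>(f::complex \<Rightarrow> complex) (lam::real). f holomorphic_on ball 0 1 \<and> f ` ball 0 1 \<subseteq> sectorG \<and> lam > 0 \<longrightarrow>
            measure diskA {z \<in> ball 0 1. norm (f z) > lam} \<le> C2 / lam ^ 4 * norm (f 0) ^ 4)
       \<and> (\<exists>K2>0. \<forall>f::complex \<Rightarrow> complex. f holomorphic_on ball 0 1 \<and> f ` ball 0 1 \<subseteq> sectorG \<longrightarrow>
            (\<integral>\<^sup>+ z. ennreal (norm (f z) ^ 2) \<partial>diskA) \<le> ennreal ((K2 * norm (f 0)) ^ 2))"
proof (intro conjI)
  show "\<exists>C2>0. \<forall>(f::complex \<Rightarrow> complex) (lam::real). f holomorphic_on ball 0 1 \<and> f ` ball 0 1 \<subseteq> sectorG \<and> lam > 0 \<longrightarrow>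
            measure diskA {z \<in> ball 0 1. norm (f z) > lam} \<le> C2 / lam ^ 4 * norm (f 0) ^ 4"
  proof (intro exI[of _ 32] conjI allI impI)
    fix f :: "complex \<Rightarrow> complex" and lam :: real
    assume a: "f holomorphic_on ball 0 1 \<and> f ` ball 0 1 \<subseteq> sectorG \<and> lam > 0"
    have "emeasure diskA {z \<in> ball 0 1. lam < cmod (f z)} \<le> ennreal (32 * (cmod (f 0) ^ 2 / lam ^ 2) ^ 2)"
      using a by (intro diskA_level(2)) auto
    moreover have "32 * (cmod (f 0) ^ 2 / lam ^ 2) ^ 2 = 32 / lam ^ 4 * cmod (f 0) ^ 4"
      by (simp add: power_divide field_simps flip: power_mult)
    ultimately show "measure diskA {z \<in> ball 0 1. norm (f z) > lam} \<le> 32 / lam ^ 4 * norm (f 0) ^ 4"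
      unfolding measure_def by (intro enn2real_leI) (use a in auto)
  qed simp
  show "\<exists>K2>0. \<forall>f::complex \<Rightarrow> complex. f holomorphic_on ball 0 1 \<and> f ` ball 0 1 \<subseteq> sectorG \<longrightarrow>
            (\<integral>\<^sup>+ z. ennreal (norm (f z) ^ 2) \<partial>diskA) \<le> ennreal ((K2 * norm (f 0)) ^ 2)"
    using part2 by (intro exI[of _ "sqrt 130"]) auto
qed

end
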